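(* Let $m,n$ be finite integers with $m\geq 2$ and $n\geq 2$. Then $\gamma_{gr}^{2}(P_m\Box P_n)=mn-1$.
   Context: $P_m$ is the path on $m$ vertices and $G\Box H$ is the Cartesian product: vertex set $V(G)\times V(H)$, with $(u,v)\sim(x,y)$ iff ($u=x$ and $vy\in E(H)$) or ($v=y$ and $ux\in E(G)$). For a vertex $v$, $N(v)$ is its open neighborhood and $N[v]=N(v)\cup\{v\}$. A sequence $S=(v_1,\ldots,v_r)$ of distinct vertices is a $2$-sequence if for each $i$ there is $u_i\in N[v_i]$ such that the number of indices $j<i$ with $u_i\in N[v_j]$ is less than $2$. $\gamma_{gr}^{2}(G)$ is the maximum length of a $2$-sequence of $G$. *)

theory Defs
  imports Main
begin

text \<open>A graph is given by a vertex set V and a symmetric irreflexive adjacency relation E.\<close>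

definition closed_nbhd :: "'a set \<Rightarrow> ('a \<Rightarrow> 'a \<Rightarrow> bool) \<Rightarrow> 'a \<Rightarrow> 'a set" where
  "closed_nbhd V E v = {u \<in> V. E v u} \<union> {v}"

definition is_k_sequence :: "nat \<Rightarrow> 'a set \<Rightarrow> ('a \<Rightarrow> 'a \<Rightarrow> bool) \<Rightarrow> 'a list \<Rightarrow> bool" where
  "is_k_sequence k V E S \<longleftrightarrow> distinct S \<and> set S \<subseteq> V \<and>
     (\<forall>i < length S. \<exists>u \<in> closed_nbhd V E (S ! i).
        card {j. j < i \<and> u \<in> closed_nbhd V E (S ! j)} < k)"

definition grundy_k :: "nat \<Rightarrow> 'a set \<Rightarrow> ('a \<Rightarrow> 'a \<Rightarrow> bool) \<Rightarrow> nat" where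
  "grundy_k k V E = Max {length S | S. is_k_sequence k V E S}"

definition path_V :: "nat \<Rightarrow> nat set" where "path_V m = {0..<m}"
definition path_E :: "nat \<Rightarrow> nat \<Rightarrow> bool" where "path_E i j \<longleftrightarrow> i = Suc j \<or> j = Suc i"

definition cart_V :: "'a set \<Rightarrow> 'b set \<Rightarrow> ('a \<times> 'b) set" where "cart_V V1 V2 = V1 \<times> V2"
definition cart_E :: "('a \<Rightarrow> 'a \<Rightarrow> bool) \<Rightarrow> ('b \<Rightarrow> 'b \<Rightarrow> bool) \<Rightarrow> 'a \<times> 'b \<Rightarrow> 'a \<times> 'b \<Rightarrow> bool" where
  "cart_E E1 E2 p q \<longleftrightarrow> (fst p = fst q \<and> E2 (snd p) (snd q)) \<or> (snd p = snd q \<and> E1 (fst p) (fst q))"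

end

theory Submission
  imports Defs
begin

lemma idx_less:
  fixes a b c d n :: nat
  assumes "d < n" "b < n"
  shows "(c*n+d < a*n+b) \<longleftrightarrow> (c < a \<or> (c = a \<and> d < b))"
proof
  assume h: "c*n+d < a*n+b"
  show "c < a \<or> (c = a \<and> d < b)"
  proof (rule ccontr)
    assume "\<not> (c < a \<or> (c = a \<and> d < b))"
    hence "a < c \<or> (c = a \<and> b \<le> d)" by auto
    thus False
    proof
      assume "a < c"
      hence "Suc a * n \<le> c * n" by (intro mult_le_mono1) simp
      thus False using h assms by simp
    qed (use h in simp)
  qed
next
  assume "c < a \<or> (c = a \<and> d < b)"
  thus "c*n+d < a*n+b"
  proof
    assume "c < a"
    hence "Suc c * n \<le> a * n" by (intro mult_le_mono1) simp
    thus ?thesis using assms by simp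
  qed simp
qed

lemma divmod_less:
  fixes i j n :: nat
  assumes "j < i" "0 < n"
  shows "j div n < i div n \<or> (j div n = i div n \<and> j mod n < i mod n)"
proof -
  have "j div n * n + j mod n < i div n * n + i mod n" using assms by simp
  thus ?thesis using idx_less[of "j mod n" n "i mod n" "j div n" "i div n"] assms by simp
qed

lemma lower:
  fixes m n :: nat
  assumes m: "m \<ge> 2" and n: "n \<ge> 2"
  defines "V \<equiv> cart_V (path_V m) (path_V n)" and "E \<equiv> cart_E path_E path_E"
  shows "is_k_sequence 2 V E (map (\<lambda>i. (i div n, i mod n)) [0..<m*n-1])"
    (is "is_k_sequence 2 V E ?S")
proof -
  have n0: "0 < n" using n by simp
  have mem: "(i div n, i mod n) \<in> V" if "i < m*n" for i
    using that n0 unfolding V_def cart_V_def path_V_def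
    by (auto simp: less_mult_imp_div_less mult.commute)
  have Sn: "?S ! i = (i div n, i mod n)" if "i < length ?S" for i using that by simp
  have dist: "distinct ?S"
    by (auto simp: distinct_map inj_on_def) (metis div_mult_mod_eq)
  have sub: "set ?S \<subseteq> V" using mem by auto
  have cond: "\<exists>u \<in> closed_nbhd V E (?S ! i).
        card {j. j < i \<and> u \<in> closed_nbhd V E (?S ! j)} < 2" if i: "i < length ?S" for i
  proof -
    define a where "a = i div n"
    define b where "b = i mod n"
    have Si: "?S ! i = (a,b)" using Sn i a_def b_def by simp
    have ilt: "i < m*n - 1" using i by simp
    have am: "a < m" using ilt n0 unfolding a_def by (simp add: less_mult_imp_div_less)
    have bn: "b < n" using n0 b_def by simp
    have iab: "i = a*n+b" using a_def b_def by simp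
    have Sj: "?S ! j = (j div n, j mod n) \<and> (j div n < a \<or> (j div n = a \<and> j mod n < b))"
      if "j < i" for j using that i divmod_less[OF that n0] a_def b_def by simp
    show ?thesis
    proof (cases "a + 1 < m")
      case True
      let ?u = "(a+1, b)"
      have uN: "?u \<in> closed_nbhd V E (?S ! i)"
        using True bn unfolding Si closed_nbhd_def V_def E_def cart_V_def path_V_def cart_E_def path_E_def
        by simp
      have "{j. j < i \<and> ?u \<in> closed_nbhd V E (?S ! j)} = {}"
      proof (safe)
        fix j assume j: "j < i" and uj: "?u \<in> closed_nbhd V E (?S ! j)"
        from Sj[OF j] uj show "j \<in> {}"
          unfolding closed_nbhd_def E_def cart_E_def path_E_def
          by (auto simp: iab)
      qed
      hence "card {j. j < i \<and> ?u \<in> closed_nbhd V E (?S ! j)} = 0" by (simp only: card.empty)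
      hence "card {j. j < i \<and> ?u \<in> closed_nbhd V E (?S ! j)} < 2" by linarith
      thus ?thesis using uN by blast
    next
      case False
      hence aeq: "a = m - 1" using am by simp
      have bn1: "b + 1 < n"
      proof (rule ccontr)
        assume "\<not> b + 1 < n"
        hence "b = n - 1" using bn by simp
        hence "i = (m-1)*n + (n-1)" using iab aeq by simp
        also have "\<dots> = m*n - 1" using m n by (simp add: algebra_simps diff_mult_distrib)
        finally show False using ilt by simp
      qed
      let ?u = "(a, b+1)"
      have uN: "?u \<in> closed_nbhd V E (?S ! i)"
        using am bn1 unfolding Si closed_nbhd_def V_def E_def cart_V_def path_V_def cart_E_def path_E_def
        by simp
      have "{j. j < i \<and> ?u \<in> closed_nbhd V E (?S ! j)} \<subseteq> {(a-1)*n + (b+1)}"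
      proof (safe)
        fix j assume j: "j < i" and uj: "?u \<in> closed_nbhd V E (?S ! j)"
        have jj: "j = j div n * n + j mod n" by simp
        from Sj[OF j] uj have "j div n = a - 1 \<and> j mod n = b + 1"
          unfolding closed_nbhd_def E_def cart_E_def path_E_def
          by auto
        thus "j = (a-1)*n + (b+1)" using jj by metis
      qed
      hence "card {j. j < i \<and> ?u \<in> closed_nbhd V E (?S ! j)} \<le> 1"
        using card_mono[of "{(a-1)*n + (b+1)}"] by fastforce
      hence "card {j. j < i \<and> ?u \<in> closed_nbhd V E (?S ! j)} < 2" by linarith
      thus ?thesis using uN by blast
    qed
  qed
  show ?thesis unfolding is_k_sequence_def using dist sub cond by blast
qed

lemma upper:
  fixes m n :: nat
  assumes m: "m \<ge> 2" and n: "n \<ge> 2"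
  defines "V \<equiv> cart_V (path_V m) (path_V n)" and "E \<equiv> cart_E path_E path_E"
  assumes S: "is_k_sequence 2 V E S"
  shows "length S \<le> m*n - 1"
proof -
  have fV: "finite V" and cV: "card V = m*n"
    unfolding V_def cart_V_def path_V_def by (simp_all add: card_cartesian_product)
  have dist: "distinct S" and sub: "set S \<subseteq> V" using S unfolding is_k_sequence_def by auto
  have le: "length S \<le> m*n" using card_mono[OF fV sub] distinct_card[OF dist] cV by simp
  show ?thesis
  proof (rule ccontr)
    assume "\<not> length S \<le> m*n - 1"
    hence len: "length S = m*n" using le by simp
    have setS: "set S = V" using card_subset_eq[OF fV sub] distinct_card[OF dist] len cV by simp
    define i where "i = length S - 1"
    have ilt: "i < length S" using len m n unfolding i_def by (simp add: Suc_le_eq)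
    obtain u where uN: "u \<in> closed_nbhd V E (S ! i)"
      and cu: "card {j. j < i \<and> u \<in> closed_nbhd V E (S ! j)} < 2"
      using S ilt unfolding is_k_sequence_def by blast
    have SiV: "S ! i \<in> V" using ilt sub nth_mem by blast
    have uV: "u \<in> V" using uN SiV unfolding closed_nbhd_def by auto
    obtain a b where ab: "u = (a,b)" by (cases u)
    have am: "a < m" and bn: "b < n" using uV ab unfolding V_def cart_V_def path_V_def by auto
    define a' where "a' = (if a = 0 then 1 else a - 1)"
    define b' where "b' = (if b = 0 then 1 else b - 1)"
    have a'm: "a' < m" and b'n: "b' < n" using am bn m n unfolding a'_def b'_def by auto
    have aa: "a' \<noteq> a" and bb: "b' \<noteq> b" unfolding a'_def b'_def by auto
    have key: "u \<in> closed_nbhd V E w" if "w \<in> {(a,b),(a',b),(a,b')}" for w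
      using that am bn a'm b'n unfolding ab closed_nbhd_def V_def cart_V_def path_V_def E_def cart_E_def path_E_def a'_def b'_def
      by (auto split: if_splits)
    obtain w1 w2 where w: "w1 \<in> {(a,b),(a',b),(a,b')}" "w2 \<in> {(a,b),(a',b),(a,b')}"
      "w1 \<noteq> w2" "w1 \<noteq> S ! i" "w2 \<noteq> S ! i"
    proof (cases "S ! i = (a,b)")
      case True thus ?thesis using that[of "(a',b)" "(a,b')"] aa bb by auto
    next
      case False
      show ?thesis
      proof (cases "S ! i = (a',b)")
        case True thus ?thesis using that[of "(a,b)" "(a,b')"] aa bb by auto
      next
        case False2: False
        thus ?thesis using that[of "(a,b)" "(a',b)"] aa bb False by auto
      qed
    qed
    have wV: "w1 \<in> set S" "w2 \<in> set S"
      using w(1,2) am bn a'm b'n unfolding setS V_def cart_V_def path_V_def by auto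
    obtain j1 where j1: "j1 < length S" "S ! j1 = w1" using wV(1) by (metis in_set_conv_nth)
    obtain j2 where j2: "j2 < length S" "S ! j2 = w2" using wV(2) by (metis in_set_conv_nth)
    have "j1 \<noteq> i" "j2 \<noteq> i" "j1 \<noteq> j2" using j1 j2 w by auto
    hence "j1 < i" "j2 < i" using j1 j2 unfolding i_def by auto
    hence sub2: "{j1, j2} \<subseteq> {j. j < i \<and> u \<in> closed_nbhd V E (S ! j)}"
      using key w j1 j2 by auto
    have "finite {j. j < i \<and> u \<in> closed_nbhd V E (S ! j)}" by simp
    from card_mono[OF this sub2] \<open>j1 \<noteq> j2\<close> cu show False by simp
  qed
qed

theorem mainTheorem13:
  fixes m n :: nat
  assumes "m \<ge> 2" and "n \<ge> 2"
  shows "grundy_k 2 (cart_V (path_V m) (path_V n)) (cart_E path_E path_E) = m * n - 1"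
  unfolding grundy_k_def
proof (rule Max_eqI)
  let ?A = "{length S | S. is_k_sequence 2 (cart_V (path_V m) (path_V n)) (cart_E path_E path_E) S}"
  have "?A \<subseteq> {..m*n - 1}" using upper[OF assms] by auto
  thus "finite ?A" using finite_subset by blast
  show "y \<le> m*n - 1" if "y \<in> ?A" for y using that upper[OF assms] by auto
  show "m*n - 1 \<in> ?A" using lower[OF assms] by force
qed

end
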